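(* Let $(c,d),(e,f)\in\mathcal{B}$ with $d$ and $f$ odd and $d\neq f$. Then $U=\{(0,0),(c,d),(e,f)\}\subseteq\mathcal{B}$ is unavoidable.
   Context: The bicyclic inverse semigroup is $\mathcal{B}=\{(a,b)\in\mathbb{Z}\times\mathbb{Z}\mid a\ge 0,\ a+b\ge 0\}$ with multiplication $(a,b)(c,d)=(\max\{c+d,a\}-d,\ b+d)$. A subset $U\subseteq\mathcal{B}$ is called avoidable if $\mathcal{B}$ can be partitioned into two subsets $A$ and $B$ such that no element of $U$ can be written as a product $xy$ of two distinct elements $x\neq y$ both in $A$, or both in $B$. A set is unavoidable if it is not avoidable. *)

theory Defs
  imports Main
begin

text \<open>The bicyclic inverse semigroup, represented as pairs of integers.\<close>

definition bicyclic :: "(int \<times> int) set" where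
  "bicyclic = {(a, b). a \<ge> 0 \<and> a + b \<ge> 0}"

definition bmult :: "int \<times> int \<Rightarrow> int \<times> int \<Rightarrow> int \<times> int" where
  "bmult x y = (case x of (a, b) \<Rightarrow> case y of (c, d) \<Rightarrow> (max (c + d) a - d, b + d))"

definition avoidable :: "(int \<times> int) set \<Rightarrow> bool" where
  "avoidable U \<longleftrightarrow> (\<exists>A B. A \<union> B = bicyclic \<and> A \<inter> B = {} \<and>
     (\<forall>x\<in>A. \<forall>y\<in>A. x \<noteq> y \<longrightarrow> bmult x y \<notin> U) \<and>
     (\<forall>x\<in>B. \<forall>y\<in>B. x \<noteq> y \<longrightarrow> bmult x y \<notin> U))"

definition unavoidable :: "(int \<times> int) set \<Rightarrow> bool" where
  "unavoidable U \<longleftrightarrow> \<not> avoidable U"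

end

theory Submission
  imports Defs
begin

lemma bmult_simp[simp]: "bmult (a, b) (c, d) = (max (c + d) a - d, b + d)"
  by (simp add: bmult_def)

lemma bic[simp]: "(a, b) \<in> bicyclic \<longleftrightarrow> a \<ge> 0 \<and> a + b \<ge> 0"
  by (simp add: bicyclic_def)

definition zz :: "int \<Rightarrow> int \<times> int" where "zz t = (max 0 (-t), t)"

lemma edge:
  assumes "A \<union> B = bicyclic" "A \<inter> B = {}"
    "\<forall>x\<in>A. \<forall>y\<in>A. x \<noteq> y \<longrightarrow> bmult x y \<notin> U"
    "\<forall>x\<in>B. \<forall>y\<in>B. x \<noteq> y \<longrightarrow> bmult x y \<notin> U"
    "x \<in> bicyclic" "y \<in> bicyclic" "x \<noteq> y" "bmult x y \<in> U"
  shows "x \<in> A \<longleftrightarrow> y \<notin> A"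
  using assms by blast

lemma refl1:
  assumes "A \<union> B = bicyclic" "A \<inter> B = {}"
    "\<forall>x\<in>A. \<forall>y\<in>A. x \<noteq> y \<longrightarrow> bmult x y \<notin> U"
    "\<forall>x\<in>B. \<forall>y\<in>B. x \<noteq> y \<longrightarrow> bmult x y \<notin> U"
    "(c, d) \<in> bicyclic" "(c, d) \<in> U" "odd d" "t \<le> c + d"
  shows "zz t \<in> A \<longleftrightarrow> zz (d - t) \<notin> A"
proof -
  have dt: "t \<noteq> d - t" using assms(7) by presburger
  have c0: "c \<ge> 0" "c + d \<ge> 0" using assms(5) by auto
  have p1: "bmult (zz t) (c, d - t) = (c, d)" using c0 assms(8) by (auto simp: zz_def max_def)
  have p2: "bmult (c + d - t, t) (c, d - t) = (c, d)" using c0 assms(8) by (auto simp: max_def)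
  have p3: "bmult (c + d - t, t) (zz (d - t)) = (c, d)" using c0 assms(8) by (auto simp: zz_def max_def)
  have e1: "zz t \<in> A \<longleftrightarrow> (c, d - t) \<notin> A"
    by (rule edge[OF assms(1-4)]) (use c0 assms(6,8) dt p1 p2 p3 in \<open>auto simp: zz_def\<close>)
  have e2: "(c + d - t, t) \<in> A \<longleftrightarrow> (c, d - t) \<notin> A"
    by (rule edge[OF assms(1-4)]) (use c0 assms(6,8) dt p1 p2 p3 in \<open>auto simp: zz_def\<close>)
  have e3: "(c + d - t, t) \<in> A \<longleftrightarrow> zz (d - t) \<notin> A"
    by (rule edge[OF assms(1-4)]) (use c0 assms(6,8) dt p1 p2 p3 in \<open>auto simp: zz_def\<close>)
  show ?thesis using e1 e2 e3 by blast
qed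

lemma refl2:
  assumes "A \<union> B = bicyclic" "A \<inter> B = {}"
    "\<forall>x\<in>A. \<forall>y\<in>A. x \<noteq> y \<longrightarrow> bmult x y \<notin> U"
    "\<forall>x\<in>B. \<forall>y\<in>B. x \<noteq> y \<longrightarrow> bmult x y \<notin> U"
    "(c, d) \<in> bicyclic" "(c, d) \<in> U" "odd d"
  shows "zz t \<in> A \<longleftrightarrow> zz (d - t) \<notin> A"
proof (cases "t \<le> c + d")
  case True
  then show ?thesis using refl1[OF assms] by blast
next
  case False
  have "d - t \<le> c + d" using False assms(5) by auto
  from refl1[OF assms this] show ?thesis by auto
qed

lemma refl0:
  assumes "A \<union> B = bicyclic" "A \<inter> B = {}"
    "\<forall>x\<in>A. \<forall>y\<in>A. x \<noteq> y \<longrightarrow> bmult x y \<notin> U"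
    "\<forall>x\<in>B. \<forall>y\<in>B. x \<noteq> y \<longrightarrow> bmult x y \<notin> U"
    "(0, 0) \<in> U" "t > 0"
  shows "zz (- t) \<in> A \<longleftrightarrow> zz t \<notin> A"
  by (rule edge[OF assms(1-4)]) (use assms(5,6) in \<open>auto simp: zz_def max_def\<close>)

theorem proposition6p1:
  fixes c d e f :: int
  assumes "(c, d) \<in> bicyclic" and "(e, f) \<in> bicyclic"
    and "odd d" and "odd f" and "d \<noteq> f"
  shows "unavoidable {(0, 0), (c, d), (e, f)}"
proof -
  let ?U = "{(0::int, 0::int), (c, d), (e, f)}"
  have False if av: "avoidable ?U"
  proof -
    obtain A B where h: "A \<union> B = bicyclic" "A \<inter> B = {}"
      "\<forall>x\<in>A. \<forall>y\<in>A. x \<noteq> y \<longrightarrow> bmult x y \<notin> ?U"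
      "\<forall>x\<in>B. \<forall>y\<in>B. x \<noteq> y \<longrightarrow> bmult x y \<notin> ?U"
      using av unfolding avoidable_def by blast
    define m where "m = (f - d) div 2"
    have m: "f - d = 2 * m" unfolding m_def using assms(3,4) by presburger
    have m0: "m \<noteq> 0" using m assms(5) by auto
    have r1: "zz m \<in> A \<longleftrightarrow> zz (f - m) \<notin> A"
      by (rule refl2[OF h assms(2) _ assms(4)]) simp
    have r2: "zz (f - m) \<in> A \<longleftrightarrow> zz (d - (f - m)) \<notin> A"
      by (rule refl2[OF h assms(1) _ assms(3)]) simp
    have eq: "d - (f - m) = - m" using m by simp
    have r3: "zz (- m) \<in> A \<longleftrightarrow> zz m \<notin> A"
    proof (cases "m > 0")
      case True
      then show ?thesis using refl0[OF h _ True] by simp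
    next
      case False
      then have "- m > 0" using m0 by simp
      from refl0[OF h _ this] show ?thesis by auto
    qed
    show False using r1 r2 r3 eq by auto
  qed
  then show ?thesis unfolding unavoidable_def by blast
qed

end
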